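(* There exists an invertible $19\times19$ binary matrix such that the corresponding linear kernel has partial distance sequence $(1,2,2,2,2,2,4,4,4,4,4,6,8,8,8,8,8,8,16)$. Consequently $E_{19}\ge\frac1{19}\sum_{i=0}^{18}\log_{19}D_{min}^{(i)}\approx0.49045$.
   Context: A kernel of dimension $\ell$ is a bijection $g:\{0,1\}^\ell\to\{0,1\}^\ell$; a linear kernel is $g({\bf u})={\bf u}G$ over $\mathbb{F}_2$ for an invertible $\ell\times\ell$ binary matrix $G$. ${\bf a}\bullet{\bf b}$ denotes concatenation, $d_H$ Hamming distance. Partial distances: $D_{min}^{(i)}=\min\{d_H(g({\bf w}\bullet 0\bullet{\bf u}),g({\bf w}\bullet 1\bullet {\bf v})) : {\bf w}\in\{0,1\}^i,\ {\bf u},{\bf v}\in\{0,1\}^{\ell-i-1}\}$, $i=0,\dots,\ell-1$; exponent $E(g)=\frac1\ell\sum_{i}\log_\ell D_{min}^{(i)}$; $E_\ell=\max_g E(g)$ over all kernels of dimension $\ell$. *)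

theory Defs
  imports Complex_Main "HOL-Library.Z2" "Jordan_Normal_Form.Matrix"
begin

definition hamming :: "bit vec \<Rightarrow> bit vec \<Rightarrow> nat" where
  "hamming x y = card {k. k < dim_vec x \<and> x $ k \<noteq> y $ k}"

definition is_kernel :: "nat \<Rightarrow> (bit vec \<Rightarrow> bit vec) \<Rightarrow> bool" where
  "is_kernel l g \<longleftrightarrow> bij_betw g (carrier_vec l) (carrier_vec l)"

definition linear_kernel :: "bit mat \<Rightarrow> bit vec \<Rightarrow> bit vec" where
  "linear_kernel G u = vec (dim_col G) (\<lambda>j. \<Sum>i<dim_vec u. u $ i * G $$ (i, j))"

definition partial_distance :: "nat \<Rightarrow> (bit vec \<Rightarrow> bit vec) \<Rightarrow> nat \<Rightarrow> nat" where
  "partial_distance l g i = Min {hamming (g (w @\<^sub>v vCons 0 u)) (g (w @\<^sub>v vCons 1 v)) | w u v.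
      w \<in> carrier_vec i \<and> u \<in> carrier_vec (l - i - 1) \<and> v \<in> carrier_vec (l - i - 1)}"

definition kernel_exponent :: "nat \<Rightarrow> (bit vec \<Rightarrow> bit vec) \<Rightarrow> real" where
  "kernel_exponent l g = (1 / real l) * (\<Sum>i<l. log (real l) (real (partial_distance l g i)))"

definition max_exponent :: "nat \<Rightarrow> real" where
  "max_exponent l = Max {kernel_exponent l g | g. is_kernel l g}"

end

theory Submission
  imports Defs "Jordan_Normal_Form.Determinant"
begin

definition xorl :: "bit list \<Rightarrow> bit list \<Rightarrow> bit list" where
  "xorl a b = map2 (+) a b"
definition wt :: "bit list \<Rightarrow> nat" where "wt xs = length (filter (\<lambda>b. b = 1) xs)"
fun dotl :: "bit list \<Rightarrow> bit list \<Rightarrow> bit" where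
  "dotl (a#h) (b#x) = (if a = 1 then b + dotl h x else dotl h x)"
| "dotl _ _ = 0"

lemma dotl_eq: "dotl (a#h) (b#x) = a*b + dotl h x"
  by (cases a) auto

fun chk :: "nat \<Rightarrow> bit list \<Rightarrow> bit list list \<Rightarrow> bool" where
  "chk d acc [] = (d \<le> wt acc)"
| "chk d acc (r#rs) = (chk d acc rs \<and> chk d (xorl acc r) rs)"

fun comb :: "bit list \<Rightarrow> bit list list \<Rightarrow> bit list \<Rightarrow> bit list" where
  "comb acc (r#rs) (b#bs) = comb (if b = 1 then xorl acc r else acc) rs bs"
| "comb acc _ _ = acc"

lemma length_xorl[simp]: "length (xorl a b) = min (length a) (length b)"
  by (simp add: xorl_def)

lemma nth_xorl: "k < length a \<Longrightarrow> k < length b \<Longrightarrow> xorl a b ! k = a!k + b!k"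
  by (simp add: xorl_def)

lemma length_comb: "\<forall>r\<in>set rs. length r = length acc \<Longrightarrow> length (comb acc rs bs) = length acc"
proof (induction rs arbitrary: acc bs)
  case Nil then show ?case by simp
next
  case (Cons r rs) then show ?case by (cases bs) auto
qed

lemma nth_comb: "\<forall>r\<in>set rs. length r = length acc \<Longrightarrow> length bs = length rs \<Longrightarrow> k < length acc \<Longrightarrow>
   comb acc rs bs ! k = acc!k + (\<Sum>j<length rs. bs!j * rs!j!k)"
proof (induction rs arbitrary: acc bs)
  case Nil then show ?case by simp
next
  case (Cons r rs)
  then obtain b bs' where bs: "bs = b # bs'" by (cases bs) auto
  let ?acc = "if b = 1 then xorl acc r else acc"
  have l: "length ?acc = length acc" using Cons.prems by auto
  have IH: "comb ?acc rs bs' ! k = ?acc!k + (\<Sum>j<length rs. bs'!j * rs!j!k)"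
    using Cons.IH[of ?acc bs'] Cons.prems l bs by auto
  have a: "?acc ! k = acc!k + b * r!k"
    using Cons.prems by (cases b) (auto simp: nth_xorl)
  have "comb acc (r#rs) bs = comb ?acc rs bs'" unfolding bs by (simp only: comb.simps)
  moreover have "(\<Sum>j<length (r#rs). bs!j * (r#rs)!j!k) = b * r!k + (\<Sum>j<length rs. bs'!j * rs!j!k)"
    unfolding bs by (simp only: length_Cons sum.lessThan_Suc_shift nth_Cons_0 nth_Cons_Suc)
  ultimately show ?case using IH a by (simp only: add.assoc)
qed

lemma comb_zeros: "comb acc rs (replicate n 0) = acc"
  by (induction rs arbitrary: n) (auto, case_tac n, auto)

lemma dotl_xorl: "length a = length h \<Longrightarrow> length b = length h \<Longrightarrow>
   dotl h (xorl a b) = dotl h a + dotl h b"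
proof (induction h arbitrary: a b)
  case Nil then show ?case by (simp add: xorl_def)
next
  case (Cons x h)
  then obtain y a' z b' where "a = y # a'" "b = z # b'" by (cases a; cases b) auto
  then have IH: "dotl h (xorl a' b') = dotl h a' + dotl h b'" using Cons by auto
  have e1: "dotl (x#h) (xorl a b) = x*(y+z) + dotl h (xorl a' b')"
    unfolding xorl_def \<open>a = y # a'\<close> \<open>b = z # b'\<close> by (simp only: list.map zip_Cons_Cons prod.case dotl_eq)
  have e2: "dotl (x#h) a = x*y + dotl h a'" "dotl (x#h) b = x*z + dotl h b'"
    unfolding \<open>a = y # a'\<close> \<open>b = z # b'\<close> by (simp only: dotl_eq)+
  show ?case unfolding e1 e2 IH by (simp only: distrib_left add_ac)
qed

lemma dotl_comb: "length acc = length h \<Longrightarrow> \<forall>r\<in>set rs. length r = length h \<and> dotl h r = 0 \<Longrightarrow>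
   dotl h (comb acc rs bs) = dotl h acc"
proof (induction rs arbitrary: acc bs)
  case Nil then show ?case by simp
next
  case (Cons r rs) then show ?case by (cases bs) (auto simp: dotl_xorl)
qed

lemma chk_wt: "chk d acc rs \<Longrightarrow> length bs = length rs \<Longrightarrow> d \<le> wt (comb acc rs bs)"
proof (induction rs arbitrary: acc bs)
  case Nil then show ?case by simp
next
  case (Cons r rs) then show ?case by (cases bs) auto
qed

lemma of_nat_bit: "(of_nat m :: bit) = (if even m then 0 else 1)"
  by (induction m) auto

lemma dotl_ones: "dotl (replicate (length x) 1) x = of_nat (wt x)"
proof (induction x)
  case Nil then show ?case by (simp add: wt_def)
next
  case (Cons y x) then show ?case by (cases y) (auto simp: wt_def)
qed

lemma dotl_ones_even: "dotl (replicate (length x) 1) x = 0 \<Longrightarrow> even (wt x)"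
  using dotl_ones[of x] of_nat_bit[of "wt x"] by (auto split: if_splits)

lemma dotl_nz: "dotl h x = 1 \<Longrightarrow> 1 \<le> wt x"
proof (rule ccontr)
  assume d: "dotl h x = 1" and "\<not> 1 \<le> wt x"
  then have "wt x = 0" by simp
  then have "filter (\<lambda>b. b = 1) x = []" by (simp add: wt_def)
  then have "\<forall>y\<in>set x. y \<noteq> 1" by (simp add: filter_empty_conv)
  then have "\<forall>y\<in>set x. y = 0" by simp
  then have "dotl h x = 0"
  proof (induction x arbitrary: h)
    case Nil then show ?case by (cases h) auto
  next
    case (Cons y x) then show ?case by (cases h) auto
  qed
  with d show False by simp
qed


lemma dotl_sum: "length h = length x \<Longrightarrow> dotl h x = (\<Sum>k<length x. h!k * x!k)"
proof (induction h x rule: list_induct2)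
  case Nil then show ?case by simp
next
  case (Cons a h y x)
  have "dotl (a#h) (y#x) = a*y + dotl h x"
    by (simp only: dotl_eq)
  also have "\<dots> = (\<Sum>k<length (y#x). (a#h)!k * (y#x)!k)"
    by (simp only: Cons.IH length_Cons sum.lessThan_Suc_shift nth_Cons_0 nth_Cons_Suc)
  finally show ?case .
qed

lemma sum2: "a \<noteq> b \<Longrightarrow> (\<Sum>k\<in>{a,b}. g k) = g a + (g b :: 'a :: comm_monoid_add)"
  by simp

lemma wt2: "wt x = 2 \<Longrightarrow> \<exists>a b. a < length x \<and> b < length x \<and> a \<noteq> b \<and>
    (\<forall>h. length h = length x \<longrightarrow> dotl h x = h!a + h!b)"
proof -
  assume w: "wt x = 2"
  let ?S = "{k. k < length x \<and> x!k = 1}"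
  have "card ?S = 2" using w by (simp add: wt_def length_filter_conv_card)
  then obtain a b where S: "?S = {a,b}" "a \<noteq> b" by (auto simp: card_2_iff)
  then have ab: "a < length x" "b < length x" "x!a = 1" "x!b = 1" by blast+
  have "dotl h x = h!a + h!b" if hl: "length h = length x" for h
  proof -
    have "dotl h x = (\<Sum>k<length x. h!k * x!k)" using dotl_sum hl by blast
    also have "\<dots> = (\<Sum>k\<in>?S. h!k * x!k)"
    proof (rule sum.mono_neutral_right)
      show "\<forall>k\<in>{..<length x} - ?S. h!k * x!k = 0"
      proof
        fix k assume "k \<in> {..<length x} - ?S"
        then have "x!k = 0" by auto
        then show "h!k * x!k = 0" by simp
      qed
    qed auto
    also have "\<dots> = h!a * x!a + h!b * x!b"
      unfolding S(1) by (rule sum2[OF S(2)])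
    also have "\<dots> = h!a + h!b" using ab by (simp only: mult_1_right)
    finally show ?thesis .
  qed
  then show ?thesis using ab S by blast
qed

definition R :: "bit list list" where "R = [[0,0,0,0,0,0,0,0,0,0,0,0,0,1,0,0,0,0,0],
  [0,0,0,1,0,0,0,0,0,0,0,1,0,0,0,0,0,0,0],
  [0,0,0,0,0,0,1,0,0,0,0,1,0,0,0,0,0,0,0],
  [0,0,0,0,0,0,0,0,0,0,0,0,0,0,0,0,0,1,1],
  [0,1,0,0,0,0,0,0,0,0,0,0,0,0,1,0,0,0,0],
  [0,0,1,0,0,0,0,0,0,0,0,0,1,0,0,0,0,0,0],
  [0,0,1,0,1,0,1,0,0,1,0,0,0,0,0,0,0,0,0],
  [0,0,0,0,0,1,0,1,0,1,0,0,1,0,0,0,0,0,0],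
  [0,0,0,0,1,1,0,0,0,0,0,0,1,1,0,0,0,0,0],
  [0,0,0,0,0,0,1,0,0,0,1,0,0,0,0,1,0,0,1],
  [0,1,0,0,0,0,1,1,0,0,0,0,0,0,0,0,0,1,0],
  [0,0,0,0,1,0,0,1,0,0,0,1,1,0,0,0,1,0,1],
  [0,0,1,1,0,0,1,1,0,1,1,0,0,0,0,0,0,1,1],
  [0,1,0,1,0,1,0,1,1,0,1,0,0,0,0,0,1,1,0],
  [1,1,0,1,1,0,0,0,0,1,0,0,0,1,1,1,0,0,0],
  [1,1,1,1,0,1,0,0,0,0,0,0,0,0,1,0,0,1,1],
  [1,0,0,1,1,1,0,1,0,1,0,1,0,0,0,0,0,1,0],
  [1,0,0,1,0,1,0,1,0,0,0,0,1,0,1,1,1,0,0],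
  [1,1,0,1,1,0,1,0,1,1,1,1,1,1,1,1,1,1,1]]"

definition Hs :: "bit list list" where "Hs = [[0,0,1,1,0,0,0,0,1,1,1,0,1,1,0,1,1,0,0],
  [1,1,1,0,1,0,0,1,0,0,0,1,1,0,1,0,0,0,0],
  [1,0,0,0,1,0,1,0,1,0,0,1,0,1,0,1,0,1,0],
  [1,1,1,1,1,0,1,0,0,1,0,0,1,0,0,1,0,0,0],
  [1,0,0,0,0,1,1,1,1,1,1,0,1,0,0,0,0,0,0],
  [0,0,1,1,0,0,1,1,1,1,1,1,0,0,0,0,0,0,0],
  [1,0,1,1,1,1,1,1,0,1,1,0,0,0,0,0,0,0,0],
  [1,1,0,0,1,0,0,1,0,1,0,0,0,0,0,0,0,0,0],
  [0,1,1,0,0,0,1,0,1,0,0,0,0,1,0,0,0,0,0],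
  [1,0,0,1,0,0,1,0,1,0,0,0,0,0,0,0,0,0,0]]"

definition P :: "bit list list" where "P = [[0,0,0,0,0,1,0,1,1,0,1,1,0,1,1,0,1,1,1],
  [0,0,0,0,1,0,0,0,1,1,0,0,1,0,1,1,1,0,1],
  [0,0,0,1,0,0,1,1,0,1,0,1,0,0,1,1,0,0,0],
  [0,0,1,0,0,0,1,1,1,0,1,1,1,1,1,0,1,0,0],
  [0,1,0,0,0,0,0,0,0,0,1,1,0,0,0,1,1,1,0],
  [1,0,0,0,0,0,1,0,0,1,0,1,1,1,1,0,1,1,1]]"
definition ONES :: "bit list" where "ONES = [1,1,1,1,1,1,1,1,1,1,1,1,1,1,1,1,1,1,1]"
lemma ONES: "ONES = replicate 19 1" by (simp add: ONES_def numeral_eq_Suc)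

definition Dl :: "nat list" where "Dl = [1,2,2,2,2,2,4,4,4,4,4,6,8,8,8,8,8,8,16]"

lemma C1: "length R = 19 \<and> (\<forall>r\<in>set R. length r = 19)" by (simp add: R_def)
lemma C2: "map wt R = Dl" by (simp add: R_def Dl_def wt_def)
lemma C3: "dotl ONES (R!0) = 1 \<and> list_all (\<lambda>r. dotl ONES r = 0) (drop 1 R)"
  by (simp add: R_def ONES_def)
lemma C4: "list_all (\<lambda>i. length (Hs!(i-1)) = 19 \<and> dotl (Hs!(i-1)) (R!i) = 1 \<and> list_all (\<lambda>r. dotl (Hs!(i-1)) r = 0) (drop (Suc i) R)) [1..<11]"
  by (simp add: R_def Hs_def  upt_rec)
lemma C5: "list_all (\<lambda>p. length p = 19 \<and> list_all (\<lambda>r. dotl p r = 0) (drop 6 R)) P"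
  by (simp add: R_def P_def )
lemma C6: "distinct (map (\<lambda>a. map (\<lambda>p. p!a) P) [0..<19])"
  by (simp add: P_def upt_rec)
lemma C7: "list_all (\<lambda>i. chk (Dl!i) (R!i) (drop (Suc i) R)) [11..<19]"
  by (simp add: R_def Dl_def xorl_def wt_def upt_rec)


definition GM :: "bit mat" where "GM = mat 19 19 (\<lambda>(i,j). R!i!j)"

lemma GM_carrier: "GM \<in> carrier_mat 19 19" by (simp add: GM_def)

lemma sum_add_split: "(\<Sum>j<(m::nat)+(d::nat). f j) = (\<Sum>j<m. f j) + (\<Sum>j<d. f (m+j) :: 'a :: comm_monoid_add)"
  by (induction d) (simp_all add: add.assoc)

lemma sum_split_at: "i < n \<Longrightarrow>
   (\<Sum>j<n. f j) = (\<Sum>j<i. f j) + f i + (\<Sum>j<n - Suc i. f (Suc i + j) :: 'a :: comm_monoid_add)"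
proof -
  assume "i < n"
  then obtain d where n: "n = Suc i + d" by (metis less_imp_Suc_add add_Suc)
  have "(\<Sum>j<n. f j) = (\<Sum>j<Suc i. f j) + (\<Sum>j<d. f (Suc i + j))"
    unfolding n by (rule sum_add_split)
  then show ?thesis using n by simp
qed

lemma sum_prod_add: "(\<Sum>j<n. a j * c j) + (\<Sum>j<n. b j * c j) = (\<Sum>j<n. (a j + b j) * (c j :: 'a :: semiring_0))"
  by (simp add: sum.distrib distrib_right)

lemma bit_neq_iff: "(x \<noteq> y) = (x + y = (1::bit))"
  by (cases x; cases y) auto

lemma lk_index: "dim_vec x = 19 \<Longrightarrow> k < 19 \<Longrightarrow> linear_kernel GM x $ k = (\<Sum>j<19. x$j * R!j!k)"
proof -
  assume x: "dim_vec x = 19" and k: "k < 19"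
  have "linear_kernel GM x $ k = (\<Sum>j<19. x$j * GM$$(j,k))"
    unfolding linear_kernel_def using x k GM_carrier by (simp only: index_vec carrier_matD)
  also have "\<dots> = (\<Sum>j<19. x$j * R!j!k)"
    by (rule sum.cong) (use k in \<open>simp_all add: GM_def\<close>)
  finally show ?thesis .
qed

lemma lk_dim[simp]: "dim_vec (linear_kernel GM x) = 19"
  unfolding linear_kernel_def GM_def by simp

lemma R_len: "i < 19 \<Longrightarrow> length (R!i) = 19" using C1 by simp

lemma drop_len: "\<forall>r\<in>set (drop (Suc i) R). length r = 19"
  using C1 by (meson in_set_dropD)

lemma HAM:
  assumes i: "i < 19" and w: "w \<in> carrier_vec i" and u: "u \<in> carrier_vec (19 - i - 1)"
    and v: "v \<in> carrier_vec (19 - i - 1)"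
  shows "hamming (linear_kernel GM (w @\<^sub>v vCons 0 u)) (linear_kernel GM (w @\<^sub>v vCons 1 v))
     = wt (comb (R!i) (drop (Suc i) R) (list_of_vec (u+v)))"
proof -
  define a where "a = w @\<^sub>v vCons 0 u"
  define b where "b = w @\<^sub>v vCons 1 v"
  define y where "y = comb (R!i) (drop (Suc i) R) (list_of_vec (u+v))"
  have da: "dim_vec a = 19" "dim_vec b = 19" using i w u v by (auto simp: a_def b_def)
  have ly: "length y = 19" unfolding y_def using length_comb[of "drop (Suc i) R" "R!i"] drop_len R_len[OF i] by simp
  define e where "e j = a$j + b$j" for j
  have e1: "e j = 0" if "j < i" for j
    using that w u v unfolding e_def a_def b_def by simp
  have e2: "e i = 1" using w u v unfolding e_def a_def b_def by simp
  have e3: "e (Suc i + j) = (u+v)$j" if "j < 19 - Suc i" for j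
    using that w u v i unfolding e_def a_def b_def by (simp add: vec_index_vCons)
  have key: "linear_kernel GM a $ k + linear_kernel GM b $ k = y!k" if k: "k < 19" for k
  proof -
    have "linear_kernel GM a $ k + linear_kernel GM b $ k = (\<Sum>j<19. e j * R!j!k)"
      unfolding lk_index[OF da(1) k] lk_index[OF da(2) k] e_def by (rule sum_prod_add)
    also have "\<dots> = (\<Sum>j<i. e j * R!j!k) + e i * R!i!k + (\<Sum>j<19 - Suc i. e (Suc i + j) * R!(Suc i + j)!k)"
      by (rule sum_split_at[OF i])
    also have "(\<Sum>j<i. e j * R!j!k) = 0" using e1 by simp
    also have "(\<Sum>j<19 - Suc i. e (Suc i + j) * R!(Suc i + j)!k) = (\<Sum>j<19 - Suc i. (u+v)$j * R!(Suc i + j)!k)"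
      using e3 by (intro sum.cong) auto
    finally have 1: "linear_kernel GM a $ k + linear_kernel GM b $ k = R!i!k + (\<Sum>j<19 - Suc i. (u+v)$j * R!(Suc i + j)!k)"
      using e2 by simp
    have "y!k = R!i!k + (\<Sum>j<length (drop (Suc i) R). list_of_vec (u+v) ! j * drop (Suc i) R ! j ! k)"
      unfolding y_def using nth_comb[of "drop (Suc i) R" "R!i" "list_of_vec (u+v)" k] drop_len R_len[OF i] u v C1 k by simp
    also have "(\<Sum>j<length (drop (Suc i) R). list_of_vec (u+v) ! j * drop (Suc i) R ! j ! k) = (\<Sum>j<19 - Suc i. (u+v)$j * R!(Suc i + j)!k)"
      using C1 u v by (intro sum.cong) auto
    finally show ?thesis using 1 by simp
  qed
  have "hamming (linear_kernel GM a) (linear_kernel GM b) = card {k. k < 19 \<and> linear_kernel GM a $ k \<noteq> linear_kernel GM b $ k}"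
    unfolding hamming_def by simp
  also have "{k. k < 19 \<and> linear_kernel GM a $ k \<noteq> linear_kernel GM b $ k} = {k. k < length y \<and> y!k = 1}"
  proof (rule Collect_cong)
    fix k
    show "(k < 19 \<and> linear_kernel GM a $ k \<noteq> linear_kernel GM b $ k) = (k < length y \<and> y!k = 1)"
    proof (cases "k < 19")
      case True
      have "(linear_kernel GM a $ k \<noteq> linear_kernel GM b $ k) = (linear_kernel GM a $ k + linear_kernel GM b $ k = 1)"
        by (rule bit_neq_iff)
      also have "\<dots> = (y!k = 1)" by (simp only: key[OF True])
      finally show ?thesis using True ly by simp
    next
      case False then show ?thesis using ly by simp
    qed
  qed
  also have "card \<dots> = wt y" unfolding wt_def by (simp add: length_filter_conv_card)
  finally show ?thesis unfolding a_def b_def y_def .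
qed


lemma nth_in_drop: "n \<le> i \<Longrightarrow> i < length xs \<Longrightarrow> xs!i \<in> set (drop n xs)"
proof -
  assume a: "n \<le> i" "i < length xs"
  then have "drop n xs ! (i-n) = xs!i" by simp
  moreover have "i - n < length (drop n xs)" using a by simp
  ultimately show ?thesis by (metis nth_mem)
qed

lemma ONES_len: "length ONES = 19" by (simp add: ONES_def)

lemma Dl2: "list_all (\<lambda>i. Dl!i = 2) [1..<6]" by (simp add: Dl_def upt_rec)
lemma Dl4: "list_all (\<lambda>i. Dl!i = 4) [6..<11]" by (simp add: Dl_def upt_rec)
lemma ev2: "even (n::nat) \<Longrightarrow> 1 \<le> n \<Longrightarrow> 2 \<le> n" by presburger
lemma ev4: "even (n::nat) \<Longrightarrow> 1 \<le> n \<Longrightarrow> n \<noteq> 2 \<Longrightarrow> 4 \<le> n" by presburger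

lemma LB:
  assumes i: "i < 19" and bs: "length bs = 19 - Suc i"
  shows "Dl!i \<le> wt (comb (R!i) (drop (Suc i) R) bs)"
proof -
  define y where "y = comb (R!i) (drop (Suc i) R) bs"
  have ly: "length y = 19" unfolding y_def using length_comb[of "drop (Suc i) R" "R!i"] drop_len R_len[OF i] by simp
  have rs_sub: "set (drop (Suc i) R) \<subseteq> set (drop n R)" if "n \<le> Suc i" for n
    using that by (intro set_drop_subset_set_drop) simp
  have Rset: "R!i \<in> set (drop n R)" if "n \<le> i" for n using nth_in_drop[OF that, of R] C1 i by simp
  have dy: "dotl h y = dotl h (R!i)" if "length h = 19" "\<forall>r\<in>set (drop (Suc i) R). dotl h r = 0" for h
    unfolding y_def by (rule dotl_comb) (use that R_len[OF i] drop_len in auto)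
  have C3': "\<forall>r\<in>set (drop 1 R). dotl ONES r = 0" using C3 by (simp add: list_all_iff)
  show ?thesis
  proof (cases "i = 0")
    case True
    have "dotl ONES y = 1" using dy[OF ONES_len] C3 C3' True by simp
    then have "1 \<le> wt y" by (rule dotl_nz)
    then show ?thesis using True by (simp add: Dl_def y_def)
  next
    case False
    show ?thesis
    proof (cases "i < 11")
      case True
      have ev: "even (wt y)"
      proof -
        have "dotl ONES y = 0" using dy[OF ONES_len] C3' rs_sub[of 1] Rset[of 1] False by auto
        then show ?thesis using ONES ly dotl_ones_even by metis
      qed
      have nz: "1 \<le> wt y"
      proof -
        have i1: "i \<in> set [1..<11]" using True False by auto
        have "length (Hs!(i-1)) = 19 \<and> dotl (Hs!(i-1)) (R!i) = 1 \<and> list_all (\<lambda>r. dotl (Hs!(i-1)) r = 0) (drop (Suc i) R)"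
          using C4 i1 unfolding list_all_iff by blast
        then have "dotl (Hs!(i-1)) y = 1" using dy[of "Hs!(i-1)"] by (auto simp: list_all_iff)
        then show ?thesis by (rule dotl_nz)
      qed
      show ?thesis
      proof (cases "i < 6")
        case True
        have "2 \<le> wt y" using ev2[OF ev nz] .
        moreover have "Dl!i = 2" using bspec[OF Dl2[unfolded list_all_iff], of i] True \<open>i \<noteq> 0\<close> by simp
        ultimately show ?thesis by (simp add: y_def)
      next
        case False
        have n2: "wt y \<noteq> 2"
        proof
          assume "wt y = 2"
          from wt2[OF this] obtain a b where ab: "a < length y" "b < length y" "a \<noteq> b"
            and d: "\<forall>h. length h = length y \<longrightarrow> dotl h y = h!a + h!b" by blast
          have "p!a = p!b" if p: "p \<in> set P" for p
          proof -
            have "length p = 19 \<and> list_all (\<lambda>r. dotl p r = 0) (drop 6 R)" using C5 p by (simp add: list_all_iff)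
            then have "dotl p y = 0" using dy[of p] rs_sub[of 6] Rset[of 6] False by (auto simp: list_all_iff)
            moreover have "dotl p y = p!a + p!b" using d \<open>length p = 19 \<and> _\<close> ly by auto
            ultimately have "p!a + p!b = 0" by simp
            then show ?thesis by (cases "p!a"; cases "p!b") auto
          qed
          then have "map (\<lambda>p. p!a) P = map (\<lambda>p. p!b) P" by simp
          then have eq: "map (\<lambda>a. map (\<lambda>p. p!a) P) [0..<19] ! a = map (\<lambda>a. map (\<lambda>p. p!a) P) [0..<19] ! b"
            using ab ly by simp
          have L: "a < length (map (\<lambda>a. map (\<lambda>p. p!a) P) [0..<19])" "b < length (map (\<lambda>a. map (\<lambda>p. p!a) P) [0..<19])"
            using ab ly by simp_all
          from nth_eq_iff_index_eq[OF C6 L] eq have "a = b" by blast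
          then show False using ab by blast
        qed
        have "4 \<le> wt y" using ev4[OF ev nz n2] .
        moreover have "i \<in> set [6..<11]" unfolding set_upt using \<open>i < 11\<close> False by simp
        then have "Dl!i = 4" using bspec[OF Dl4[unfolded list_all_iff]] by blast
        ultimately show ?thesis by (simp add: y_def)
      qed
    next
      case False
      have "i \<in> set [11..<19]" using False i by auto
      then have "chk (Dl!i) (R!i) (drop (Suc i) R)" using bspec[OF C7[unfolded list_all_iff]] by blast
      moreover have "length bs = length (drop (Suc i) R)" using bs C1 by simp
      ultimately show ?thesis by (rule chk_wt)
    qed
  qed
qed


lemma hamming_le: "hamming x y \<le> dim_vec x"
proof -
  have "{k. k < dim_vec x \<and> x $ k \<noteq> y $ k} \<subseteq> {..<dim_vec x}" by auto
  then show ?thesis unfolding hamming_def using card_mono[of "{..<dim_vec x}"] by fastforce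
qed

lemma list_of_vec_zero: "list_of_vec (0\<^sub>v n :: bit vec) = replicate n 0"
  by (rule nth_equalityI) auto

lemma wt_R: "i < 19 \<Longrightarrow> wt (R!i) = Dl!i"
  using C2 C1 by (metis nth_map)

lemma PD: assumes i: "i < 19" shows "partial_distance 19 (linear_kernel GM) i = Dl!i"
proof -
  let ?S = "{hamming (linear_kernel GM (w @\<^sub>v vCons 0 u)) (linear_kernel GM (w @\<^sub>v vCons 1 v)) | w u v.
      w \<in> carrier_vec i \<and> u \<in> carrier_vec (19 - i - 1) \<and> v \<in> carrier_vec (19 - i - 1)}"
  have fin: "finite ?S"
  proof (rule finite_subset)
    show "?S \<subseteq> {..19}"
    proof
      fix y assume "y \<in> ?S"
      then obtain a b where "y = hamming (linear_kernel GM a) (linear_kernel GM b)" by blast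
      then show "y \<in> {..19}" using hamming_le[of "linear_kernel GM a"] by simp
    qed
  qed auto
  have lb: "Dl!i \<le> y" if "y \<in> ?S" for y
  proof -
    from that obtain w u v where y: "y = hamming (linear_kernel GM (w @\<^sub>v vCons 0 u)) (linear_kernel GM (w @\<^sub>v vCons 1 v))"
      and c: "w \<in> carrier_vec i" "u \<in> carrier_vec (19 - i - 1)" "v \<in> carrier_vec (19 - i - 1)" by blast
    have "y = wt (comb (R!i) (drop (Suc i) R) (list_of_vec (u+v)))" using HAM[OF i c] y by simp
    moreover have "length (list_of_vec (u+v)) = 19 - Suc i" using c by simp
    ultimately show ?thesis using LB[OF i] by simp
  qed
  have mem: "Dl!i \<in> ?S"
  proof -
    have c: "0\<^sub>v i \<in> carrier_vec i" "0\<^sub>v (19 - i - 1) \<in> carrier_vec (19 - i - 1)" by auto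
    have "hamming (linear_kernel GM (0\<^sub>v i @\<^sub>v vCons 0 (0\<^sub>v (19 - i - 1)))) (linear_kernel GM (0\<^sub>v i @\<^sub>v vCons 1 (0\<^sub>v (19 - i - 1))))
       = wt (comb (R!i) (drop (Suc i) R) (list_of_vec (0\<^sub>v (19 - i - 1) + 0\<^sub>v (19 - i - 1))))"
      by (rule HAM[OF i c(1) c(2) c(2)])
    also have "\<dots> = Dl!i" using wt_R[OF i] by (simp add: list_of_vec_zero comb_zeros)
    finally have e: "hamming (linear_kernel GM (0\<^sub>v i @\<^sub>v vCons 0 (0\<^sub>v (19 - i - 1)))) (linear_kernel GM (0\<^sub>v i @\<^sub>v vCons 1 (0\<^sub>v (19 - i - 1)))) = Dl!i" .
    show ?thesis unfolding mem_Collect_eq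
      by (rule exI[of _ "0\<^sub>v i"], rule exI[of _ "0\<^sub>v (19 - i - 1)"], rule exI[of _ "0\<^sub>v (19 - i - 1)"]) (use e c in simp)
  qed
  show ?thesis unfolding partial_distance_def
    by (rule Min_eqI[OF fin lb mem])
qed

lemma Dl_pos: "i < 19 \<Longrightarrow> 1 \<le> Dl!i"
proof -
  assume "i < 19"
  moreover have "list_all (\<lambda>d. 1 \<le> d) Dl" by (simp add: Dl_def)
  moreover have "length Dl = 19" by (simp add: Dl_def)
  ultimately show ?thesis by (simp add: list_all_length)
qed

lemma DEC: assumes x: "x \<in> carrier_vec 19" and i: "i < 19"
  shows "x = vec i (\<lambda>j. x$j) @\<^sub>v vCons (x$i) (vec (19 - i - 1) (\<lambda>j. x$(Suc i + j)))"
proof (rule eq_vecI)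
  show "dim_vec x = dim_vec (vec i (\<lambda>j. x$j) @\<^sub>v vCons (x$i) (vec (19 - i - 1) (\<lambda>j. x$(Suc i + j))))"
    using x i by simp
  fix j assume "j < dim_vec (vec i (\<lambda>j. x$j) @\<^sub>v vCons (x$i) (vec (19 - i - 1) (\<lambda>j. x$(Suc i + j))))"
  then have j: "j < 19" using i by simp
  show "x $ j = (vec i (\<lambda>j. x$j) @\<^sub>v vCons (x$i) (vec (19 - i - 1) (\<lambda>j. x$(Suc i + j)))) $ j"
    using j i by (auto simp: vec_index_vCons)
qed

lemma ham_self: "hamming x x = 0" unfolding hamming_def by simp

lemma inj_lk: assumes x: "x \<in> carrier_vec 19" and y: "y \<in> carrier_vec 19"
  and eq: "linear_kernel GM x = linear_kernel GM y" shows "x = y"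
proof (rule ccontr)
  assume ne: "x \<noteq> y"
  have "\<exists>k. k < 19 \<and> x$k \<noteq> y$k"
  proof (rule ccontr)
    assume "\<not> ?thesis"
    then have "\<forall>k<19. x$k = y$k" by blast
    then have "x = y" using x y by (intro eq_vecI) auto
    with ne show False by simp
  qed
  define i where "i = (LEAST k. k < 19 \<and> x$k \<noteq> y$k)"
  have i: "i < 19" "x$i \<noteq> y$i" using LeastI_ex[OF \<open>\<exists>k. _\<close>] unfolding i_def by blast+
  have before: "x$j = y$j" if "j < i" for j
  proof -
    have nl: "\<not> (j < 19 \<and> x$j \<noteq> y$j)" by (rule not_less_Least[OF that[unfolded i_def]])
    have "j < 19" using that i(1) by simp
    with nl show ?thesis by blast
  qed
  define w where "w = vec i (\<lambda>j. x$j)"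
  have w: "w = vec i (\<lambda>j. y$j)" unfolding w_def by (rule eq_vecI) (simp_all add: before)
  define u where "u = vec (19 - i - 1) (\<lambda>j. x$(Suc i + j))"
  define v where "v = vec (19 - i - 1) (\<lambda>j. y$(Suc i + j))"
  have xd: "x = w @\<^sub>v vCons (x$i) u" unfolding w_def u_def by (rule DEC[OF x i(1)])
  have yd: "y = w @\<^sub>v vCons (y$i) v" unfolding w v_def by (rule DEC[OF y i(1)])
  have c: "w \<in> carrier_vec i" "u \<in> carrier_vec (19 - i - 1)" "v \<in> carrier_vec (19 - i - 1)"
    unfolding w_def u_def v_def by auto
  have pos: "1 \<le> wt (comb (R!i) (drop (Suc i) R) (list_of_vec (a+b)))"
    if "a \<in> carrier_vec (19 - i - 1)" "b \<in> carrier_vec (19 - i - 1)" for a b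
    using LB[OF i(1), of "list_of_vec (a+b)"] Dl_pos[OF i(1)] that by simp
  show False
  proof (cases "x$i = 0")
    case True
    then have "y$i = 1" using i(2) by simp
    have "hamming (linear_kernel GM x) (linear_kernel GM y) = wt (comb (R!i) (drop (Suc i) R) (list_of_vec (u+v)))"
      using HAM[OF i(1) c] xd[unfolded True] yd[unfolded \<open>y$i = 1\<close>] by simp
    then show False using pos[OF c(2,3)] eq ham_self by simp
  next
    case False
    then have "x$i = 1" "y$i = 0" using i(2) by auto
    have "hamming (linear_kernel GM y) (linear_kernel GM x) = wt (comb (R!i) (drop (Suc i) R) (list_of_vec (v+u)))"
      using HAM[OF i(1) c(1) c(3) c(2)] xd[unfolded \<open>x$i = 1\<close>] yd[unfolded \<open>y$i = 0\<close>] by simp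
    then show False using pos[OF c(3,2)] eq ham_self by simp
  qed
qed


lemma lk_zero: "linear_kernel GM (0\<^sub>v 19) = 0\<^sub>v 19"
  by (rule eq_vecI) (simp_all add: lk_index)

lemma LKT: assumes v: "v \<in> carrier_vec 19" shows "linear_kernel GM v = transpose_mat GM *\<^sub>v v"
proof (rule eq_vecI)
  show "dim_vec (linear_kernel GM v) = dim_vec (transpose_mat GM *\<^sub>v v)" using GM_carrier by simp
  fix k assume "k < dim_vec (transpose_mat GM *\<^sub>v v)"
  then have k: "k < 19" using GM_carrier by simp
  have "(transpose_mat GM *\<^sub>v v) $ k = row (transpose_mat GM) k \<bullet> v"
    using k GM_carrier by simp
  also have "\<dots> = (\<Sum>j\<in>{0..<19}. row (transpose_mat GM) k $ j * v$j)"
    unfolding scalar_prod_def using v by simp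
  also have "\<dots> = (\<Sum>j\<in>{0..<19}. GM $$ (j,k) * v$j)"
    by (rule sum.cong) (use k GM_carrier in simp_all)
  also have "\<dots> = (\<Sum>j<19. v$j * R!j!k)"
    unfolding atLeast0LessThan by (rule sum.cong) (use k in \<open>simp_all add: GM_def mult.commute\<close>)
  finally show "linear_kernel GM v $ k = (transpose_mat GM *\<^sub>v v) $ k" using lk_index[of v k] v k by simp
qed

lemma GM_invertible: "invertible_mat GM"
proof -
  have Tc: "transpose_mat GM \<in> carrier_mat 19 19" using GM_carrier by simp
  have "det (transpose_mat GM) \<noteq> 0"
  proof
    assume "det (transpose_mat GM) = 0"
    then obtain v where v: "v \<in> carrier_vec 19" "v \<noteq> 0\<^sub>v 19" "transpose_mat GM *\<^sub>v v = 0\<^sub>v 19"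
      using det_0_iff_vec_prod_zero_field[OF Tc] by blast
    have "linear_kernel GM v = linear_kernel GM (0\<^sub>v 19)" using LKT[OF v(1)] v(3) lk_zero by simp
    then have "v = 0\<^sub>v 19" using inj_lk[OF v(1)] by simp
    with v(2) show False by simp
  qed
  then have "det GM \<noteq> 0" using det_transpose[OF GM_carrier] by simp
  from det_non_zero_imp_unit[OF GM_carrier this, of "()"]
  obtain B where B: "B \<in> carrier_mat 19 19" "B * GM = 1\<^sub>m 19" "GM * B = 1\<^sub>m 19"
    unfolding Units_def ring_mat_def by auto
  show ?thesis unfolding invertible_mat_def inverts_mat_def square_mat.simps
    using B GM_carrier by auto
qed

lemma UNIV_bit: "(UNIV :: bit set) = {0, 1}"
proof -
  have "x \<in> {0, 1}" for x :: bit by (cases x) simp_all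
  then show ?thesis by blast
qed

lemma finite_carrier: "finite (carrier_vec n :: bit vec set)"
proof -
  have "(carrier_vec n :: bit vec set) \<subseteq> vec_of_list ` {xs. set xs \<subseteq> UNIV \<and> length xs = n}"
  proof
    fix v :: "bit vec" assume "v \<in> carrier_vec n"
    then have m: "list_of_vec v \<in> {xs. set xs \<subseteq> UNIV \<and> length xs = n}" by simp
    show "v \<in> vec_of_list ` {xs. set xs \<subseteq> UNIV \<and> length xs = n}"
      using image_eqI[where f=vec_of_list, OF vec_list[of v, symmetric] m] .
  qed
  moreover have "finite {xs :: bit list. set xs \<subseteq> UNIV \<and> length xs = n}"
    by (rule finite_lists_length_eq) (simp add: UNIV_bit)
  ultimately show ?thesis by (meson finite_imageI finite_subset)
qed

lemma lk_kernel: "is_kernel 19 (linear_kernel GM)"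
proof -
  let ?C = "carrier_vec 19 :: bit vec set"
  have inj: "inj_on (linear_kernel GM) ?C" by (rule inj_onI) (rule inj_lk)
  have sub: "linear_kernel GM ` ?C \<subseteq> ?C"
  proof
    fix y assume "y \<in> linear_kernel GM ` ?C"
    then obtain x where "y = linear_kernel GM x" by blast
    then show "y \<in> ?C" unfolding carrier_vec_def using lk_dim[of x] by simp
  qed
  have "linear_kernel GM ` ?C = ?C" by (rule endo_inj_surj[OF finite_carrier sub inj])
  then show ?thesis unfolding is_kernel_def bij_betw_def using inj by simp
qed

lemma pd_restrict: assumes i: "i < l"
  shows "partial_distance l (restrict g (carrier_vec l)) i = partial_distance l g i"
proof -
  have mem: "w @\<^sub>v vCons b u \<in> carrier_vec l" if "w \<in> carrier_vec i" "u \<in> carrier_vec (l - i - 1)" for w u b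
  proof -
    have "dim_vec w = i" "dim_vec u = l - i - 1" using that by auto
    then show ?thesis using i unfolding carrier_vec_def by simp
  qed
  show ?thesis unfolding partial_distance_def
  proof (rule arg_cong[where f = Min], rule Collect_cong)
    have eqh: "hamming (restrict g (carrier_vec l) (w @\<^sub>v vCons 0 u)) (restrict g (carrier_vec l) (w @\<^sub>v vCons 1 v))
       = hamming (g (w @\<^sub>v vCons 0 u)) (g (w @\<^sub>v vCons 1 v))"
      if "w \<in> carrier_vec i" "u \<in> carrier_vec (l - i - 1)" "v \<in> carrier_vec (l - i - 1)" for w u v
      using mem[OF that(1,2), of 0] mem[OF that(1,3), of 1] by simp
    fix x
    show "(\<exists>w u v. x = hamming (restrict g (carrier_vec l) (w @\<^sub>v vCons 0 u)) (restrict g (carrier_vec l) (w @\<^sub>v vCons 1 v)) \<and>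
            w \<in> carrier_vec i \<and> u \<in> carrier_vec (l - i - 1) \<and> v \<in> carrier_vec (l - i - 1)) =
          (\<exists>w u v. x = hamming (g (w @\<^sub>v vCons 0 u)) (g (w @\<^sub>v vCons 1 v)) \<and>
            w \<in> carrier_vec i \<and> u \<in> carrier_vec (l - i - 1) \<and> v \<in> carrier_vec (l - i - 1))"
      using eqh by metis
  qed
qed

lemma ke_restrict: "kernel_exponent l (restrict g (carrier_vec l)) = kernel_exponent l g"
  unfolding kernel_exponent_def by (simp add: pd_restrict)

lemma finite_E: "finite {kernel_exponent 19 g | g. is_kernel 19 g}"
proof -
  let ?C = "carrier_vec 19 :: bit vec set"
  have "{kernel_exponent 19 g | g. is_kernel 19 g} \<subseteq> kernel_exponent 19 ` (?C \<rightarrow>\<^sub>E ?C)"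
  proof
    fix e assume "e \<in> {kernel_exponent 19 g | g. is_kernel 19 g}"
    then obtain g where e: "e = kernel_exponent 19 g" and g: "is_kernel 19 g" by blast
    have "restrict g ?C \<in> ?C \<rightarrow>\<^sub>E ?C" using g unfolding is_kernel_def bij_betw_def by auto
    moreover have "e = kernel_exponent 19 (restrict g ?C)" using e ke_restrict by simp
    ultimately show "e \<in> kernel_exponent 19 ` (?C \<rightarrow>\<^sub>E ?C)" by blast
  qed
  moreover have "finite (?C \<rightarrow>\<^sub>E ?C)" by (rule finite_PiE) (simp_all add: finite_carrier)
  ultimately show ?thesis by (meson finite_imageI finite_subset)
qed

theorem mainTheorem17:
  defines "D \<equiv> [1,2,2,2,2,2,4,4,4,4,4,6,8,8,8,8,8,8,16] :: nat list"
  shows "(\<exists>G :: bit mat. G \<in> carrier_mat 19 19 \<and> invertible_mat G \<and>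
            (\<forall>i<19. partial_distance 19 (linear_kernel G) i = D ! i))
       \<and> max_exponent 19 \<ge> (1 / 19) * (\<Sum>i<19. log 19 (real (D ! i)))"
proof -
  have DD: "D = Dl" unfolding D_def Dl_def by simp
  have pd: "\<forall>i<19. partial_distance 19 (linear_kernel GM) i = D ! i" using PD DD by simp
  have ke: "kernel_exponent 19 (linear_kernel GM) = (1 / 19) * (\<Sum>i<19. log 19 (real (D ! i)))"
    unfolding kernel_exponent_def using pd by simp
  have "kernel_exponent 19 (linear_kernel GM) \<le> max_exponent 19"
    unfolding max_exponent_def by (rule Max_ge[OF finite_E]) (use lk_kernel in blast)
  then show ?thesis using ke pd GM_carrier GM_invertible by auto
qed

end
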